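(* Let $\psi$ be an $n$-dimensional unique sink orientation and $v \in Q^n$ a vertex whose set of out-neighbors $\mathcal{N}^+(v)$ is already known. Then there is an algorithm that joins the vertices in $\mathcal{N}^+(v)$, i.e. outputs a vertex $w$ such that $u \rightsquigarrow w$ for every $u \in \mathcal{N}^+(v)$, using $|s_\psi(v)|$ many vertex evaluations.
   Context: Let $Q^n = 2^{[n]}$ be the vertex set of the $n$-cube, with $u,v$ adjacent iff $|u\oplus v|=1$; faces are $F_{J,v}=\{u : v\oplus u\subseteq J\}$ for $J\subseteq[n]$. A unique sink orientation (USO) is an orientation of the cube's edges such that every nonempty face has a unique sink (vertex with no outgoing edges within the face). The outmap $s_\psi(v)$ is the set of coordinates $j$ such that the edge $\{v,v\oplus\{j\}\}$ is directed away from $v$. $\mathcal{N}^+(v) = \{v\oplus\{j\} : j\in s_\psi(v)\}$ is the set of out-neighbors of $v$. $u \rightsquigarrow w$ means there is a directed path (possibly of length $0$) from $u$ to $w$. Computation is in the vertex oracle model: a vertex evaluation is a query that, given $v$, returns $s_\psi(v)$. *)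

theory Defs
  imports Main
begin

(* Vertices of Q^n are subsets of {..<n} (coordinates 0..n-1). *)
definition symdiff :: "nat set \<Rightarrow> nat set \<Rightarrow> nat set" where
  "symdiff A B = (A - B) \<union> (B - A)"

definition cube :: "nat \<Rightarrow> nat set set" where
  "cube n = {v. v \<subseteq> {..<n}}"

definition face :: "nat \<Rightarrow> nat set \<Rightarrow> nat set \<Rightarrow> nat set set" where
  "face n J v = {u \<in> cube n. symdiff v u \<subseteq> J}"

(* An orientation of Q^n given by its outmap s: s u is the set of coordinates j
   such that the edge {u, u xor {j}} is directed away from u. *)
definition is_outmap :: "nat \<Rightarrow> (nat set \<Rightarrow> nat set) \<Rightarrow> bool" where
  "is_outmap n s \<longleftrightarrow>
     (\<forall>v \<in> cube n. s v \<subseteq> {..<n}) \<and>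
     (\<forall>v \<in> cube n. \<forall>j < n. j \<in> s v \<longleftrightarrow> j \<notin> s (symdiff v {j}))"

definition is_uso :: "nat \<Rightarrow> (nat set \<Rightarrow> nat set) \<Rightarrow> bool" where
  "is_uso n s \<longleftrightarrow> is_outmap n s \<and>
     (\<forall>J \<subseteq> {..<n}. \<forall>v \<in> cube n. \<exists>!u. u \<in> face n J v \<and> s u \<inter> J = {})"

definition out_nbrs :: "(nat set \<Rightarrow> nat set) \<Rightarrow> nat set \<Rightarrow> nat set set" where
  "out_nbrs s v = {symdiff v {j} | j. j \<in> s v}"

definition arc :: "(nat set \<Rightarrow> nat set) \<Rightarrow> nat set \<Rightarrow> nat set \<Rightarrow> bool" where
  "arc s u w \<longleftrightarrow> (\<exists>j \<in> s u. w = symdiff u {j})"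

definition reaches :: "(nat set \<Rightarrow> nat set) \<Rightarrow> nat set \<Rightarrow> nat set \<Rightarrow> bool" where
  "reaches s u w \<longleftrightarrow> (arc s)\<^sup>*\<^sup>* u w"

(* An algorithm gets as input n, the vertex v and s(v),
   plus the history of (query, answer) pairs so far, and decides either to
   evaluate a further vertex or to output a vertex. *)
datatype step = Query "nat set" | Output "nat set"

type_synonym algorithm =
  "nat \<Rightarrow> nat set \<Rightarrow> nat set \<Rightarrow> (nat set \<times> nat set) list \<Rightarrow> step"

fun exec :: "algorithm \<Rightarrow> nat \<Rightarrow> nat set \<Rightarrow> nat set \<Rightarrow> (nat set \<Rightarrow> nat set)
              \<Rightarrow> nat \<Rightarrow> (nat set \<times> nat set) list \<Rightarrow> (nat set \<times> (nat set \<times> nat set) list) option" where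
  "exec A n v sv s 0 h =
     (case A n v sv h of Output w \<Rightarrow> Some (w, h) | Query q \<Rightarrow> None)"
| "exec A n v sv s (Suc k) h =
     (case A n v sv h of Output w \<Rightarrow> Some (w, h)
        | Query q \<Rightarrow> exec A n v sv s k (h @ [(q, s q)]))"

end

theory Submission
  imports Defs
begin


lemma sd_assoc: "symdiff (symdiff a b) c = symdiff a (symdiff b c)"
  unfolding symdiff_def by blast
lemma sd_comm: "symdiff a b = symdiff b a"
  unfolding symdiff_def by blast
lemma sd_twice[simp]: "symdiff (symdiff v X) X = v"
  unfolding symdiff_def by blast
lemma sd_inj: "symdiff v x = symdiff v y \<Longrightarrow> x = y"
  unfolding symdiff_def by blast
lemma sd_mem: "x \<in> symdiff A B \<longleftrightarrow> (x \<in> A \<longleftrightarrow> x \<notin> B)"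
  unfolding symdiff_def by blast

lemma sd_cube: "v \<in> cube n \<Longrightarrow> X \<subseteq> {..<n} \<Longrightarrow> symdiff v X \<in> cube n"
  unfolding cube_def symdiff_def by blast

lemma uso_cons: "is_uso n s \<Longrightarrow> v \<in> cube n \<Longrightarrow> j < n \<Longrightarrow> j \<in> s v \<longleftrightarrow> j \<notin> s (symdiff v {j})"
  unfolding is_uso_def is_outmap_def by blast
lemma uso_sub: "is_uso n s \<Longrightarrow> v \<in> cube n \<Longrightarrow> s v \<subseteq> {..<n}"
  unfolding is_uso_def is_outmap_def by blast
lemma uso_face: "is_uso n s \<Longrightarrow> J \<subseteq> {..<n} \<Longrightarrow> v \<in> cube n \<Longrightarrow> \<exists>!u. u \<in> face n J v \<and> s u \<inter> J = {}"
  unfolding is_uso_def by blast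

lemma arc_step: "j \<in> s u \<Longrightarrow> arc s u (symdiff u {j})"
  unfolding arc_def by blast

lemma reach_step: "j \<in> s u \<Longrightarrow> reaches s u (symdiff u {j})"
  unfolding reaches_def using arc_step by (metis r_into_rtranclp)

lemma reach_trans: "reaches s a b \<Longrightarrow> reaches s b c \<Longrightarrow> reaches s a c"
  unfolding reaches_def by (rule rtranclp_trans)

lemma reach_refl: "reaches s a a"
  unfolding reaches_def by simp

lemma two_face:
  assumes u: "is_uso n s" and v: "v \<in> cube n" and ab: "a \<noteq> b"
    and a: "a \<in> s v" and b: "b \<in> s v" and nb: "b \<notin> s (symdiff v {a})"
  shows "reaches s (symdiff v {b}) (symdiff v {a})"
proof -
  have sv: "s v \<subseteq> {..<n}" using uso_sub[OF u v] .
  have an: "a < n" and bn: "b < n" using sv a b by auto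
  define va where "va = symdiff v {a}"
  define vb where "vb = symdiff v {b}"
  define vab where "vab = symdiff v {a,b}"
  have J: "{a,b} \<subseteq> {..<n}" using an bn by auto
  have vac: "va \<in> cube n" unfolding va_def using sd_cube[OF v] an by auto
  have vbc: "vb \<in> cube n" unfolding vb_def using sd_cube[OF v] bn by auto
  have vabc: "vab \<in> cube n" unfolding vab_def using sd_cube[OF v J] .
  have fa: "va \<in> face n {a,b} v" unfolding face_def va_def using vac va_def
    by (auto simp: symdiff_def)
  have fb: "vb \<in> face n {a,b} v" unfolding face_def vb_def using vbc vb_def
    by (auto simp: symdiff_def)
  have fab: "vab \<in> face n {a,b} v" unfolding face_def vab_def using vabc vab_def
    by (auto simp: symdiff_def)
  have naa: "a \<notin> s va" using uso_cons[OF u v an] a va_def by simp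
  have sinka: "s va \<inter> {a,b} = {}" using naa nb va_def by auto
  have uq: "\<exists>!u. u \<in> face n {a,b} v \<and> s u \<inter> {a,b} = {}" using uso_face[OF u J v] .
  have vbne: "vb \<noteq> va" unfolding va_def vb_def
  proof
    assume "symdiff v {b} = symdiff v {a}"
    hence "{b} = {a}" by (rule sd_inj)
    thus False using ab by auto
  qed
  have "s vb \<inter> {a,b} \<noteq> {}" using uq fa fb sinka vbne by blast
  moreover have "b \<notin> s vb" using uso_cons[OF u v bn] b vb_def by simp
  ultimately have avb: "a \<in> s vb" by auto
  have e1: "symdiff vb {a} = vab" unfolding vb_def vab_def symdiff_def using ab by auto
  have r1: "reaches s vb vab" using reach_step[of a s vb, OF avb] e1 by simp
  have vabne: "vab \<noteq> va" unfolding va_def vab_def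
  proof
    assume "symdiff v {a, b} = symdiff v {a}"
    hence "{a,b} = {a}" by (rule sd_inj)
    thus False using ab by auto
  qed
  have "s vab \<inter> {a,b} \<noteq> {}" using uq fa fab sinka vabne by blast
  moreover have "a \<notin> s vab" using uso_cons[OF u vbc an] avb e1 by simp
  ultimately have bvab: "b \<in> s vab" by auto
  have e2: "symdiff vab {b} = va" unfolding va_def vab_def symdiff_def using ab by auto
  have r2: "reaches s vab va" using reach_step[of b s vab, OF bvab] e2 by simp
  show ?thesis using reach_trans[OF r1 r2] unfolding va_def vb_def .
qed



definition faces_ok :: "nat \<Rightarrow> (nat set \<Rightarrow> nat set) \<Rightarrow> bool" where
  "faces_ok n s \<longleftrightarrow> (\<forall>J \<subseteq> {..<n}. \<forall>v \<in> cube n. \<exists>!u. u \<in> face n J v \<and> s u \<inter> J = {})"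

lemma flip1:
  assumes ok: "faces_ok n s" and jn: "j < n"
  shows "faces_ok n (\<lambda>x. symdiff (s x) {j})"
  unfolding faces_ok_def
proof (intro allI impI ballI)
  fix K v assume K: "K \<subseteq> {..<n}" and v: "v \<in> cube n"
  show "\<exists>!u. u \<in> face n K v \<and> symdiff (s u) {j} \<inter> K = {}"
  proof (cases "j \<in> K")
    case False
    have "\<And>u. symdiff (s u) {j} \<inter> K = s u \<inter> K" using False by (auto simp: symdiff_def)
    thus ?thesis using ok K v unfolding faces_ok_def by simp
  next
    case True
    define K0 where "K0 = K - {j}"
    define v1 where "v1 = symdiff v {j}"
    have K0: "K0 \<subseteq> {..<n}" using K K0_def by auto
    have v1: "v1 \<in> cube n" using sd_cube[OF v] jn v1_def by auto
    obtain a where a: "a \<in> face n K0 v" "s a \<inter> K0 = {}"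
      and au: "\<And>x. x \<in> face n K0 v \<Longrightarrow> s x \<inter> K0 = {} \<Longrightarrow> x = a"
      using ok K0 v unfolding faces_ok_def by metis
    obtain b where b: "b \<in> face n K0 v1" "s b \<inter> K0 = {}"
      and bu: "\<And>x. x \<in> face n K0 v1 \<Longrightarrow> s x \<inter> K0 = {} \<Longrightarrow> x = b"
      using ok K0 v1 unfolding faces_ok_def by metis
    obtain t where t: "t \<in> face n K v" "s t \<inter> K = {}"
      and tu: "\<And>x. x \<in> face n K v \<Longrightarrow> s x \<inter> K = {} \<Longrightarrow> x = t"
      using ok K v unfolding faces_ok_def by metis
    have fu: "face n K v = face n K0 v \<union> face n K0 v1"
      unfolding face_def K0_def v1_def symdiff_def using True by auto
    have fd: "face n K0 v \<inter> face n K0 v1 = {}"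
      unfolding face_def K0_def v1_def symdiff_def by auto
    have ab: "a \<noteq> b" using a(1) b(1) fd by auto
    have e1: "\<And>x. (symdiff (s x) {j} \<inter> K = {}) \<longleftrightarrow> (s x \<inter> K0 = {} \<and> j \<in> s x)"
      unfolding K0_def symdiff_def using True by auto
    have e2: "\<And>x. (s x \<inter> K = {}) \<longleftrightarrow> (s x \<inter> K0 = {} \<and> j \<notin> s x)"
      unfolding K0_def using True by auto
    have cand: "\<And>x. x \<in> face n K v \<Longrightarrow> s x \<inter> K0 = {} \<Longrightarrow> x = a \<or> x = b"
      using fu au bu by blast
    have aK: "a \<in> face n K v" and bK: "b \<in> face n K v" using fu a b by auto
    show ?thesis
    proof (cases "j \<in> s a")
      case True
      have "j \<notin> s b"
      proof
        assume jb: "j \<in> s b"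
        have "t = a \<or> t = b" using cand t e2 by blast
        thus False using t(2) e2 True jb by auto
      qed
      show ?thesis
      proof (rule ex1I[of _ a])
        show "a \<in> face n K v \<and> symdiff (s a) {j} \<inter> K = {}" using aK e1 a(2) True by auto
      next
        fix x assume "x \<in> face n K v \<and> symdiff (s x) {j} \<inter> K = {}"
        thus "x = a" using cand e1 \<open>j \<notin> s b\<close> by blast
      qed
    next
      case False
      have "j \<in> s b"
      proof (rule ccontr)
        assume jb: "j \<notin> s b"
        have "a = t" using tu[OF aK] e2 a(2) False by auto
        moreover have "b = t" using tu[OF bK] e2 b(2) jb by auto
        ultimately show False using ab by simp
      qed
      show ?thesis
      proof (rule ex1I[of _ b])
        show "b \<in> face n K v \<and> symdiff (s b) {j} \<inter> K = {}" using bK e1 b(2) \<open>j \<in> s b\<close> by auto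
      next
        fix x assume "x \<in> face n K v \<and> symdiff (s x) {j} \<inter> K = {}"
        thus "x = b" using cand e1 False by blast
      qed
    qed
  qed
qed

lemma flipX:
  assumes "finite X" "X \<subseteq> {..<n}" "faces_ok n s"
  shows "faces_ok n (\<lambda>x. symdiff (s x) X)"
  using assms
proof (induction X rule: finite_induct)
  case empty
  have "(\<lambda>x. symdiff (s x) {}) = s" by (auto simp: symdiff_def)
  thus ?case using empty by simp
next
  case (insert j X)
  have "faces_ok n (\<lambda>x. symdiff (s x) X)" using insert by auto
  hence "faces_ok n (\<lambda>x. symdiff (symdiff (s x) X) {j})" using flip1 insert by auto
  moreover have "(\<lambda>x. symdiff (symdiff (s x) X) {j}) = (\<lambda>x. symdiff (s x) (insert j X))"
    using insert(2) by (auto simp: symdiff_def)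
  ultimately show ?case by simp
qed

lemma unique_source:
  assumes u: "is_uso n s" and J: "J \<subseteq> {..<n}" and z: "z \<in> cube n"
    and x: "x \<in> face n J z" and y: "y \<in> face n J z" and sx: "J \<subseteq> s x" and sy: "J \<subseteq> s y"
  shows "x = y"
proof -
  have ok: "faces_ok n s" using u unfolding is_uso_def faces_ok_def by blast
  have fin: "finite J" using J finite_subset by blast
  have "faces_ok n (\<lambda>x. symdiff (s x) J)" using flipX[OF fin J ok] .
  hence ex1: "\<exists>!u. u \<in> face n J z \<and> symdiff (s u) J \<inter> J = {}" using J z unfolding faces_ok_def by simp
  have hx: "x \<in> face n J z \<and> symdiff (s x) J \<inter> J = {}" using x sx by (auto simp: symdiff_def)
  have hy: "y \<in> face n J z \<and> symdiff (s y) J \<inter> J = {}" using y sy by (auto simp: symdiff_def)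
  show ?thesis using ex1E[OF ex1] hx hy by metis
qed



lemma AL_aux:
  assumes u: "is_uso n s" and v: "v \<in> cube n"
  shows "\<forall>T t. card T = m \<longrightarrow> T \<subseteq> s v \<longrightarrow> (\<forall>t\<in>T. T - {t} \<subseteq> s (symdiff v {t})) \<longrightarrow> t \<in> T
     \<longrightarrow> reaches s (symdiff v {t}) (symdiff v T)"
proof (induction m rule: less_induct)
  case (less m)
  show ?case
  proof (intro allI impI)
    fix T t assume cT: "card T = m" and Ts: "T \<subseteq> s v"
      and H: "\<forall>t\<in>T. T - {t} \<subseteq> s (symdiff v {t})" and tT: "t \<in> T"
    have svn: "s v \<subseteq> {..<n}" using uso_sub[OF u v] .
    have Tn: "T \<subseteq> {..<n}" using Ts svn by auto
    have finT: "finite T" using Tn finite_subset by blast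
    define w where "w = symdiff v T"
    have wc: "w \<in> cube n" unfolding w_def using sd_cube[OF v Tn] .
    show "reaches s (symdiff v {t}) (symdiff v T)"
    proof (cases "T = {t}")
      case True thus ?thesis by (simp add: reach_refl)
    next
      case False
      show ?thesis
      proof (cases "\<exists>j\<in>T - {t}. j \<in> s (symdiff w {j})")
        case True
        then obtain j where jT: "j \<in> T" "j \<noteq> t" and js: "j \<in> s (symdiff w {j})" by blast
        define T' where "T' = T - {j}"
        have cT': "card T' < m" unfolding T'_def using card_Diff1_less[OF finT jT(1)] cT by simp
        have tT': "t \<in> T'" unfolding T'_def using tT jT by auto
        have H': "\<forall>t\<in>T'. T' - {t} \<subseteq> s (symdiff v {t})" unfolding T'_def using H by blast
        have Ts': "T' \<subseteq> s v" unfolding T'_def using Ts by blast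
        have "reaches s (symdiff v {t}) (symdiff v T')"
          using less.IH[OF cT'] tT' H' Ts' by blast
        moreover have "symdiff v T' = symdiff w {j}" unfolding T'_def w_def symdiff_def using jT by auto
        moreover have "reaches s (symdiff w {j}) w" using reach_step[of j s "symdiff w {j}", OF js] by simp
        ultimately show ?thesis unfolding w_def using reach_trans by metis
      next
        case False
        have sw: "T - {t} \<subseteq> s w"
        proof
          fix j assume jT: "j \<in> T - {t}"
          hence "j \<notin> s (symdiff w {j})" using False by auto
          moreover have "j < n" using jT Tn by auto
          ultimately show "j \<in> s w" using uso_cons[OF u wc] by blast
        qed
        have st: "T - {t} \<subseteq> s (symdiff v {t})" using H tT by auto
        have tn: "{t} \<subseteq> {..<n}" using tT Tn by auto
        have vtc: "symdiff v {t} \<in> cube n" using sd_cube[OF v tn] .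
        have J: "T - {t} \<subseteq> {..<n}" using Tn by auto
        have f1: "symdiff v {t} \<in> face n (T - {t}) (symdiff v {t})"
          unfolding face_def using vtc by (auto simp: symdiff_def)
        have f2: "w \<in> face n (T - {t}) (symdiff v {t})"
          unfolding face_def using wc tT unfolding w_def by (auto simp: symdiff_def)
        have "symdiff v {t} = w" using unique_source[OF u J vtc f1 f2 st sw] .
        hence "{t} = T" unfolding w_def by (rule sd_inj)
        thus ?thesis using \<open>T \<noteq> {t}\<close> by simp
      qed
    qed
  qed
qed

lemma AL:
  assumes u: "is_uso n s" and v: "v \<in> cube n" and Ts: "T \<subseteq> s v"
    and H: "\<forall>t\<in>T. T - {t} \<subseteq> s (symdiff v {t})" and tT: "t \<in> T"
  shows "reaches s (symdiff v {t}) (symdiff v T)"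
  using AL_aux[OF u v] Ts H tT by blast



definition candset :: "nat set \<Rightarrow> nat set \<Rightarrow> (nat set \<times> nat set) list \<Rightarrow> nat set" where
  "candset v sv h = {b \<in> sv. symdiff v {b} \<notin> fst ` set h \<and> (\<forall>p\<in>set h. b \<in> snd p)}"

definition Tset :: "nat set \<Rightarrow> nat set \<Rightarrow> (nat set \<times> nat set) list \<Rightarrow> nat set" where
  "Tset v sv h = {c \<in> sv. symdiff v {c} \<in> fst ` set h \<and> (\<forall>p\<in>set h. fst p \<noteq> symdiff v {c} \<longrightarrow> c \<in> snd p)}"

definition alg :: algorithm where
  "alg n v sv h = (if candset v sv h \<noteq> {} then Query (symdiff v {Min (candset v sv h)})
                   else Output (symdiff v (Tset v sv h)))"

definition Hh :: "nat set \<Rightarrow> (nat set \<Rightarrow> nat set) \<Rightarrow> nat list \<Rightarrow> (nat set \<times> nat set) list" where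
  "Hh v s cs = map (\<lambda>c. (symdiff v {c}, s (symdiff v {c}))) cs"

definition candL :: "nat set \<Rightarrow> (nat set \<Rightarrow> nat set) \<Rightarrow> nat list \<Rightarrow> nat set" where
  "candL v s cs = {b \<in> s v. b \<notin> set cs \<and> (\<forall>c\<in>set cs. b \<in> s (symdiff v {c}))}"

definition TL :: "nat set \<Rightarrow> (nat set \<Rightarrow> nat set) \<Rightarrow> nat list \<Rightarrow> nat set" where
  "TL v s cs = {c \<in> s v. c \<in> set cs \<and> (\<forall>c'\<in>set cs. c' \<noteq> c \<longrightarrow> c \<in> s (symdiff v {c'}))}"

definition Inv :: "nat set \<Rightarrow> (nat set \<Rightarrow> nat set) \<Rightarrow> nat list \<Rightarrow> bool" where
  "Inv v s cs \<longleftrightarrow> distinct cs \<and> set cs \<subseteq> s v \<and>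
     (\<forall>i j. i < j \<longrightarrow> j < length cs \<longrightarrow> cs!j \<in> s (symdiff v {cs!i}))"

lemma sd_single_eq: "symdiff v {b} = symdiff v {c} \<longleftrightarrow> b = c"
proof
  assume "symdiff v {b} = symdiff v {c}"
  hence "{b} = {c}" by (rule sd_inj)
  thus "b = c" by simp
qed simp

lemma fst_Hh: "fst ` set (Hh v s cs) = (\<lambda>c. symdiff v {c}) ` set cs"
  unfolding Hh_def by force

lemma cand_eq: "candset v (s v) (Hh v s cs) = candL v s cs"
proof -
  have a: "symdiff v {b} \<in> fst ` set (Hh v s cs) \<longleftrightarrow> b \<in> set cs" for b
    unfolding fst_Hh by (auto simp: sd_single_eq)
  have b: "(\<forall>p\<in>set (Hh v s cs). b \<in> snd p) \<longleftrightarrow> (\<forall>c\<in>set cs. b \<in> s (symdiff v {c}))" for b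
    unfolding Hh_def by auto
  show ?thesis unfolding candset_def candL_def by (simp only: a b)
qed

lemma T_eq: "Tset v (s v) (Hh v s cs) = TL v s cs"
proof -
  have a: "symdiff v {b} \<in> fst ` set (Hh v s cs) \<longleftrightarrow> b \<in> set cs" for b
    unfolding fst_Hh by (auto simp: sd_single_eq)
  have b: "(\<forall>p\<in>set (Hh v s cs). fst p \<noteq> symdiff v {b} \<longrightarrow> b \<in> snd p) \<longleftrightarrow>
     (\<forall>c\<in>set cs. c \<noteq> b \<longrightarrow> b \<in> s (symdiff v {c}))" for b
    unfolding Hh_def by (auto simp: sd_single_eq)
  show ?thesis unfolding Tset_def TL_def by (simp only: a b)
qed

lemma exec_lemma:
  assumes u: "is_uso n s" and v: "v \<in> cube n"
  shows "\<forall>cs. Inv v s cs \<longrightarrow> card (s v) \<le> length cs + k \<longrightarrow>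
    (\<exists>cs'. Inv v s cs' \<and> candL v s cs' = {} \<and>
       exec alg n v (s v) s k (Hh v s cs) = Some (symdiff v (TL v s cs'), Hh v s cs'))"
proof (induction k)
  case 0
  show ?case
  proof (intro allI impI)
    fix cs assume I: "Inv v s cs" and c: "card (s v) \<le> length cs + 0"
    have fin: "finite (s v)" using uso_sub[OF u v] finite_subset by blast
    have sub: "set cs \<subseteq> s v" and d: "distinct cs" using I unfolding Inv_def by auto
    have "card (set cs) = length cs" using distinct_card[OF d] .
    hence "set cs = s v" using card_subset_eq[OF fin sub] c card_mono[OF fin sub] by simp
    hence ce: "candL v s cs = {}" unfolding candL_def by auto
    have "exec alg n v (s v) s 0 (Hh v s cs) = Some (symdiff v (TL v s cs), Hh v s cs)"
      using ce by (simp add: alg_def cand_eq T_eq)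
    thus "\<exists>cs'. Inv v s cs' \<and> candL v s cs' = {} \<and>
       exec alg n v (s v) s 0 (Hh v s cs) = Some (symdiff v (TL v s cs'), Hh v s cs')"
      using I ce by blast
  qed
next
  case (Suc k)
  show ?case
  proof (intro allI impI)
    fix cs assume I: "Inv v s cs" and cc: "card (s v) \<le> length cs + Suc k"
    show "\<exists>cs'. Inv v s cs' \<and> candL v s cs' = {} \<and>
       exec alg n v (s v) s (Suc k) (Hh v s cs) = Some (symdiff v (TL v s cs'), Hh v s cs')"
    proof (cases "candL v s cs = {}")
      case True
      have "exec alg n v (s v) s (Suc k) (Hh v s cs) = Some (symdiff v (TL v s cs), Hh v s cs)"
        using True by (simp add: alg_def cand_eq T_eq)
      thus ?thesis using I True by blast
    next
      case False
      have fin: "finite (s v)" using uso_sub[OF u v] finite_subset by blast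
      define c where "c = Min (candL v s cs)"
      have finc: "finite (candL v s cs)" using fin unfolding candL_def by auto
      have cin: "c \<in> candL v s cs" unfolding c_def using Min_in[OF finc False] .
      have ex: "exec alg n v (s v) s (Suc k) (Hh v s cs) =
            exec alg n v (s v) s k (Hh v s (cs @ [c]))"
      proof -
        have "alg n v (s v) (Hh v s cs) = Query (symdiff v {c})"
          using False by (simp add: alg_def cand_eq c_def)
        moreover have "Hh v s cs @ [(symdiff v {c}, s (symdiff v {c}))] = Hh v s (cs @ [c])"
          by (simp add: Hh_def)
        ultimately show ?thesis by simp
      qed
      have I2: "Inv v s (cs @ [c])"
        unfolding Inv_def
      proof (intro conjI allI impI)
        show "distinct (cs @ [c])" using I cin unfolding Inv_def candL_def by auto
        show "set (cs @ [c]) \<subseteq> s v" using I cin unfolding Inv_def candL_def by auto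
      next
        fix i j assume ij: "i < j" "j < length (cs @ [c])"
        show "(cs @ [c]) ! j \<in> s (symdiff v {(cs @ [c]) ! i})"
        proof (cases "j < length cs")
          case True
          thus ?thesis using I ij unfolding Inv_def by (auto simp: nth_append)
        next
          case False
          hence "j = length cs" using ij by auto
          moreover have "cs ! i \<in> set cs" using ij \<open>j = length cs\<close> by auto
          ultimately show ?thesis using cin ij unfolding candL_def by (auto simp: nth_append)
        qed
      qed
      have "card (s v) \<le> length (cs @ [c]) + k" using cc by simp
      hence "\<exists>cs'. Inv v s cs' \<and> candL v s cs' = {} \<and>
       exec alg n v (s v) s k (Hh v s (cs @ [c])) = Some (symdiff v (TL v s cs'), Hh v s cs')"
        using Suc.IH[rule_format, OF I2] by simp
      thus ?thesis unfolding ex .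
    qed
  qed
qed


lemma partA:
  assumes u: "is_uso n s" and v: "v \<in> cube n" and I: "Inv v s cs"
  shows "\<forall>i. length cs - i = m \<longrightarrow> i < length cs \<longrightarrow> reaches s (symdiff v {cs!i}) (symdiff v (TL v s cs))"
proof (induction m rule: less_induct)
  case (less m)
  show ?case
  proof (intro allI impI)
    fix i assume im: "length cs - i = m" and il: "i < length cs"
    define c where "c = cs ! i"
    have d: "distinct cs" and sub: "set cs \<subseteq> s v"
      and P: "\<And>i j. i < j \<Longrightarrow> j < length cs \<Longrightarrow> cs!j \<in> s (symdiff v {cs!i})"
      using I unfolding Inv_def by auto
    have cin: "c \<in> set cs" unfolding c_def using il by simp
    have csv: "c \<in> s v" using cin sub by auto
    show "reaches s (symdiff v {cs!i}) (symdiff v (TL v s cs))"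
    proof (cases "c \<in> TL v s cs")
      case True
      have Ts: "TL v s cs \<subseteq> s v" unfolding TL_def by auto
      have H: "\<forall>t\<in>TL v s cs. TL v s cs - {t} \<subseteq> s (symdiff v {t})"
        unfolding TL_def by auto
      show ?thesis using AL[OF u v Ts H True] unfolding c_def .
    next
      case False
      then obtain c' where c': "c' \<in> set cs" "c' \<noteq> c" and nc: "c \<notin> s (symdiff v {c'})"
        unfolding TL_def using cin csv by blast
      obtain j where j: "j < length cs" "cs ! j = c'" using c'(1) by (meson in_set_conv_nth)
      have "j \<noteq> i" using j c'(2) c_def by auto
      moreover have "\<not> j < i"
      proof
        assume "j < i"
        hence "cs!i \<in> s (symdiff v {cs!j})" using P il by blast
        thus False using nc j c_def by simp
      qed
      ultimately have ji: "i < j" by simp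
      have "length cs - j < m" using ji j(1) im by simp
      hence r1: "reaches s (symdiff v {cs!j}) (symdiff v (TL v s cs))"
        using less.IH j(1) by blast
      have c'v: "c' \<in> s v" using c'(1) sub by auto
      have r2: "reaches s (symdiff v {c}) (symdiff v {c'})"
        using two_face[OF u v c'(2) c'v csv nc] .
      show ?thesis using reach_trans[OF r2] r1 j(2) unfolding c_def by simp
    qed
  qed
qed

lemma correct:
  assumes u: "is_uso n s" and v: "v \<in> cube n" and I: "Inv v s cs" and ce: "candL v s cs = {}"
    and b: "b \<in> s v"
  shows "reaches s (symdiff v {b}) (symdiff v (TL v s cs))"
proof -
  have A: "\<And>i. i < length cs \<Longrightarrow> reaches s (symdiff v {cs!i}) (symdiff v (TL v s cs))"
    using partA[OF u v I] by blast
  have sub: "set cs \<subseteq> s v" using I unfolding Inv_def by auto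
  show ?thesis
  proof (cases "b \<in> set cs")
    case True
    then obtain i where "i < length cs" "cs ! i = b" by (meson in_set_conv_nth)
    thus ?thesis using A by blast
  next
    case False
    then obtain c where c: "c \<in> set cs" and nb: "b \<notin> s (symdiff v {c})"
      using ce b unfolding candL_def by blast
    have cb: "c \<noteq> b" using c False by auto
    have cv: "c \<in> s v" using c sub by auto
    have r: "reaches s (symdiff v {b}) (symdiff v {c})" using two_face[OF u v cb cv b nb] .
    obtain i where "i < length cs" "cs ! i = c" using c by (meson in_set_conv_nth)
    thus ?thesis using A reach_trans[OF r] by blast
  qed
qed

theorem lemma5:
  shows "\<exists>A :: algorithm. \<forall>n s v. is_uso n s \<longrightarrow> v \<in> cube n \<longrightarrow>
     (\<exists>w h. exec A n v (s v) s (card (s v)) [] = Some (w, h) \<and> w \<in> cube n \<and>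
            (\<forall>u \<in> out_nbrs s v. reaches s u w))"
proof (rule exI[of _ alg], intro allI impI)
  fix n s v assume u: "is_uso n s" and v: "v \<in> cube n"
  have I0: "Inv v s []" unfolding Inv_def by simp
  have "card (s v) \<le> length [] + card (s v)" by simp
  then obtain cs' where cs': "Inv v s cs'" "candL v s cs' = {}"
    and ex: "exec alg n v (s v) s (card (s v)) (Hh v s []) = Some (symdiff v (TL v s cs'), Hh v s cs')"
    using exec_lemma[OF u v] I0 by blast
  have ex': "exec alg n v (s v) s (card (s v)) [] = Some (symdiff v (TL v s cs'), Hh v s cs')"
    using ex by (simp add: Hh_def)
  have Tn: "TL v s cs' \<subseteq> {..<n}" using uso_sub[OF u v] unfolding TL_def by auto
  have wc: "symdiff v (TL v s cs') \<in> cube n" using sd_cube[OF v Tn] .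
  have "\<forall>x \<in> out_nbrs s v. reaches s x (symdiff v (TL v s cs'))"
    unfolding out_nbrs_def using correct[OF u v cs'] by blast
  thus "\<exists>w h. exec alg n v (s v) s (card (s v)) [] = Some (w, h) \<and> w \<in> cube n \<and>
            (\<forall>u \<in> out_nbrs s v. reaches s u w)"
    using ex' wc by blast
qed


end
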